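(* Let $\mu\in(0,1)$, $n>0$ and $k<0$ be real constants with $\frac{2k}{n^2}+\mu>0$, let $a_1=\frac{2k}{n^2}+\mu-1$, $b_1=\left(-\frac{\mu}{2k}\right)^{1/3}$, and assume $b_1^2>a_1^2$. Consider the system $$\ddot x-2n\dot y=\Omega_x,\qquad \ddot y+2n\dot x=\Omega_y,\qquad \ddot z=\Omega_z,$$ where $\Omega(x,y,z)=\frac{n^2}{2}(x^2+y^2)-k r_1^2+\frac{\mu}{r_2}$, $r_1^2=(x+\mu)^2+y^2+z^2$, $r_2^2=(x+\mu-1)^2+y^2+z^2$. Then each of the triangular equilibrium points $\left(\frac{2k}{n^2},0,\pm(b_1^2-a_1^2)^{1/2}\right)$ is linearly unstable: the characteristic equation of the variational (linearized) equations about the point, $$\lambda^6+2(n^2+3k)\lambda^4+n^2\left[n^2-6k\,\frac{3a_1^2-b_1^2}{b_1^2}\right]\lambda^2+6n^4k\,\frac{b_1^2-a_1^2}{b_1^2}=0,$$ has a positive real root $\lambda$.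
   Context: This is Robe's restricted three-body problem with the more massive primary an oblate spheroid ($n^2=1+\frac32 A_1$, $A_1$ the oblateness coefficient; $\mu=m_2/(m_1+m_2)$; $k$ a density-dependent constant). The variational equations about an equilibrium $(x_0,y_0,z_0)$ are obtained by substituting $(x_0+\xi,y_0+\eta,z_0+\zeta)$ and keeping linear terms: $\ddot\xi-2n\dot\eta=\Omega^0_{xx}\xi+\Omega^0_{xy}\eta+\Omega^0_{xz}\zeta$, $\ddot\eta+2n\dot\xi=\Omega^0_{yx}\xi+\Omega^0_{yy}\eta+\Omega^0_{yz}\zeta$, $\ddot\zeta=\Omega^0_{zx}\xi+\Omega^0_{zy}\eta+\Omega^0_{zz}\zeta$, where superscript $0$ denotes evaluation at the equilibrium; the characteristic equation comes from seeking solutions proportional to $e^{\lambda t}$. *)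

theory Defs
  imports "HOL-Analysis.Analysis"
begin

definition r1sq :: "real \<Rightarrow> real^3 \<Rightarrow> real" where
  "r1sq \<mu> p = (p$1 + \<mu>)^2 + (p$2)^2 + (p$3)^2"

definition r2 :: "real \<Rightarrow> real^3 \<Rightarrow> real" where
  "r2 \<mu> p = sqrt ((p$1 + \<mu> - 1)^2 + (p$2)^2 + (p$3)^2)"

definition Omega :: "real \<Rightarrow> real \<Rightarrow> real \<Rightarrow> real^3 \<Rightarrow> real" where
  "Omega \<mu> n k p = n^2 / 2 * ((p$1)^2 + (p$2)^2) - k * r1sq \<mu> p + \<mu> / r2 \<mu> p"

definition partial2 :: "(real^3 \<Rightarrow> real) \<Rightarrow> 3 \<Rightarrow> 3 \<Rightarrow> real^3 \<Rightarrow> real" where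
  "partial2 f i j p =
     deriv (\<lambda>s. deriv (\<lambda>t. f (p + s *\<^sub>R axis j 1 + t *\<^sub>R axis i 1)) 0) 0"

text \<open>Characteristic matrix of the variational equations
  xi'' - 2 n eta' = Oxx xi + Oxy eta + Oxz zeta, eta'' + 2 n xi' = ..., zeta'' = ...,
  obtained by substituting solutions proportional to exp(lambda t).\<close>
definition char_matrix :: "real \<Rightarrow> real \<Rightarrow> real \<Rightarrow> real^3 \<Rightarrow> real \<Rightarrow> real^3^3" where
  "char_matrix \<mu> n k p lam =
     (let H = (\<lambda>i j. partial2 (Omega \<mu> n k) i j p) in
      vector [vector [lam^2 - H 1 1, - 2 * n * lam - H 1 2, - H 1 3],
              vector [2 * n * lam - H 2 1, lam^2 - H 2 2, - H 2 3],
              vector [- H 3 1, - H 3 2, lam^2 - H 3 3]])"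

definition char_poly :: "real \<Rightarrow> real \<Rightarrow> real \<Rightarrow> real^3 \<Rightarrow> real \<Rightarrow> real" where
  "char_poly \<mu> n k p lam = det (char_matrix \<mu> n k p lam)"

end

theory Submission
  imports Defs
begin

lemma alg2: fixes C B \<mu> W u1 u2 u3 q1 q2 q3 :: real assumes "W>0"
  shows "- ((C * \<mu> * (W * sqrt W) - \<mu> * B * ((2 * (u1 * q1) + 2 * (u2 * q2) + 2 * (u3 * q3)) * sqrt W + (2 * (u1 * q1) + 2 * (u2 * q2) + 2 * (u3 * q3)) * W/(2 * sqrt W))) / (W * sqrt W * (W * sqrt W)))
   = 3 * \<mu> * (q1 * u1+q2 * u2+q3 * u3) * B/(W^2 * sqrt W) - \<mu> * C/(W * sqrt W)"
proof -
  define S where "S = sqrt W"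
  have S0: "S > 0" using assms S_def by auto
  have W: "W = S*S" using assms S_def by simp
  show ?thesis using S0 unfolding S_def[symmetric] W apply (simp add: field_simps) by algebra
qed
lemma d_sqrt:
  fixes w :: "real \<Rightarrow> real"
  assumes "(w has_real_derivative w') (at x)" "w x > 0"
  shows "((\<lambda>t. sqrt (w t)) has_real_derivative w' / (2 * sqrt (w x))) (at x)"
  using DERIV_chain2[OF DERIV_real_sqrt[OF assms(2)] assms(1)] by (simp add: field_simps)

lemma hess:
  fixes p u v :: "real^3" and \<mu> n k :: real
  defines "W \<equiv> (p$1+\<mu>-1)^2 + (p$2)^2 + (p$3)^2"
  assumes W0: "W > 0"
  shows "deriv (\<lambda>s. deriv (\<lambda>t. Omega \<mu> n k (p + s *\<^sub>R u + t *\<^sub>R v)) 0) 0 =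
     n^2*(u$1* v$1 + u$2* v$2) - 2*k*(u$1* v$1+u$2* v$2+u$3* v$3)
     - \<mu>*(u$1* v$1+u$2* v$2+u$3* v$3) / (W * sqrt W)
     + 3*\<mu>*((p$1+\<mu>-1)*u$1 + p$2*u$2 + p$3*u$3)*((p$1+\<mu>-1)* v$1 + p$2* v$2 + p$3* v$3) / (W^2 * sqrt W)" (is "_ = ?R")
proof -
  define Ws where "Ws s = (p$1+s*u$1+\<mu>-1)^2 + (p$2+s*u$2)^2 + (p$3+s*u$3)^2" for s
  define D1 where "D1 s = n^2*((p$1+s*u$1)* v$1 + (p$2+s*u$2)* v$2)
      - 2*k*((p$1+s*u$1+\<mu>)* v$1 + (p$2+s*u$2)* v$2 + (p$3+s*u$3)* v$3)
      - \<mu>*((p$1+s*u$1+\<mu>-1)* v$1 + (p$2+s*u$2)* v$2 + (p$3+s*u$3)* v$3) / (Ws s * sqrt (Ws s))" for s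
  have om: "Omega \<mu> n k (p + s *\<^sub>R u + t *\<^sub>R v) =
     n^2/2*((p$1+s*u$1+t* v$1)^2 + (p$2+s*u$2+t* v$2)^2)
     - k*((p$1+s*u$1+t* v$1+\<mu>)^2 + (p$2+s*u$2+t* v$2)^2 + (p$3+s*u$3+t* v$3)^2)
     + \<mu> / sqrt ((p$1+s*u$1+t* v$1+\<mu>-1)^2 + (p$2+s*u$2+t* v$2)^2 + (p$3+s*u$3+t* v$3)^2)" for s t
    by (simp add: Omega_def r1sq_def r2_def algebra_simps)
  have inner: "deriv (\<lambda>t. Omega \<mu> n k (p + s *\<^sub>R u + t *\<^sub>R v)) 0 = D1 s" if "Ws s > 0" for s
  proof (rule DERIV_imp_deriv)
    show "((\<lambda>t. Omega \<mu> n k (p + s *\<^sub>R u + t *\<^sub>R v)) has_real_derivative D1 s) (at 0)"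
      unfolding om
      apply (rule DERIV_cong)
      apply (rule d_sqrt derivative_eq_intros refl | (use that in \<open>simp add: Ws_def\<close>; fail))+
      using that unfolding D1_def
      apply (simp add: Ws_def[symmetric])
      apply (simp add: field_simps)
      done
  qed
  have ev: "eventually (\<lambda>s. Ws s > 0) (nhds 0)"
  proof -
    have o: "open {s. (0::real) < Ws s}" unfolding Ws_def by (intro open_Collect_less continuous_intros)
    show ?thesis unfolding eventually_nhds using o W0 by (intro exI[of _ "{s. 0 < Ws s}"]) (auto simp: Ws_def W_def)
  qed
  obtain S where S: "S > 0" "W = S^2" using W0 by (metis real_sqrt_gt_zero real_sqrt_pow2 less_imp_le)
  have Wp: "(p$1+\<mu>-1)^2 + (p$2)^2 + (p$3)^2 = S^2" using S W_def by simp
  have W0': "Ws 0 = W" by (simp add: Ws_def W_def)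
  have "(D1 has_real_derivative ?R) (at 0)"
    unfolding D1_def Ws_def
    apply (rule DERIV_cong)
    apply (rule d_sqrt derivative_eq_intros refl | (use W0 in \<open>simp add: W_def\<close>; fail))+
    apply (simp add: W_def[symmetric])
    by (rule alg2[OF W0])
  then have "((\<lambda>s. deriv (\<lambda>t. Omega \<mu> n k (p + s *\<^sub>R u + t *\<^sub>R v)) 0) has_real_derivative ?R) (at 0)"
    by (subst DERIV_cong_ev[OF refl _ refl]) (use ev inner in \<open>auto elim!: eventually_mono\<close>)
  then show ?thesis by (rule DERIV_imp_deriv)
qed

lemma cubic_root:
  fixes c2 c1 c0 :: real assumes "c0 < 0"
  shows "\<exists>L>0. L^3 + c2*L^2 + c1*L + c0 = 0"
proof -
  define f where "f L = L^3 + c2*L^2 + c1*L + c0" for L :: real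
  define M where "M = 1 + \<bar>c2\<bar> + \<bar>c1\<bar> + \<bar>c0\<bar>"
  have M1: "M \<ge> 1" unfolding M_def by simp
  have "f M \<ge> M^2 * (M - \<bar>c2\<bar> - \<bar>c1\<bar> - \<bar>c0\<bar>)"
  proof -
    have a: "c2*M^2 \<ge> -\<bar>c2\<bar>*M^2"
      using mult_right_mono[of "-\<bar>c2\<bar>" c2 "M^2"] by simp
    have b: "c1*M \<ge> -\<bar>c1\<bar>*M^2"
    proof -
      have "c1*M \<ge> -\<bar>c1\<bar>*M" using M1 mult_right_mono[of "-\<bar>c1\<bar>" c1 M] by simp
      moreover have "\<bar>c1\<bar>*M \<le> \<bar>c1\<bar>*M^2" using M1 by (simp add: power2_eq_square mult_left_mono)
      ultimately show ?thesis by linarith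
    qed
    have c: "c0 \<ge> -\<bar>c0\<bar>*M^2"
    proof -
      have "1 \<le> M^2" using M1 by (simp add: one_le_power)
      then have "\<bar>c0\<bar>*1 \<le> \<bar>c0\<bar>*M^2" by (intro mult_left_mono) auto
      then show ?thesis by linarith
    qed
    show ?thesis using a b c unfolding f_def by (simp add: algebra_simps power3_eq_cube power2_eq_square)
  qed
  moreover have "M - \<bar>c2\<bar> - \<bar>c1\<bar> - \<bar>c0\<bar> = 1" unfolding M_def by simp
  ultimately have "M^2 \<le> f M" by simp
  then have fM: "f M \<ge> 0" using zero_le_power2[of M] by linarith
  have f0: "f 0 \<le> 0" using assms unfolding f_def by simp
  have "continuous_on {0..M} f" unfolding f_def by (intro continuous_intros)
  then obtain L where L: "0 \<le> L" "L \<le> M" "f L = 0" using IVT'[of f 0 0 M] f0 fM M1 by auto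
  have "L \<noteq> 0" using L(3) assms unfolding f_def by auto
  with L have "L > 0" "L^3 + c2*L^2 + c1*L + c0 = 0" unfolding f_def by auto
  then show ?thesis by blast
qed

theorem mainTheorem2:
  fixes \<mu> n k a1 b1 z0 :: real
  assumes "0 < \<mu>" "\<mu> < 1" "n > 0" "k < 0"
    and "2 * k / n^2 + \<mu> > 0"
    and a1: "a1 = 2 * k / n^2 + \<mu> - 1"
    and b1: "b1 = root 3 (- \<mu> / (2 * k))"
    and "b1^2 > a1^2"
    and z0: "z0 = sqrt (b1^2 - a1^2) \<or> z0 = - sqrt (b1^2 - a1^2)"
  shows "(\<exists>l::real. l > 0 \<and>
            l^6 + 2 * (n^2 + 3 * k) * l^4
            + n^2 * (n^2 - 6 * k * (3 * a1^2 - b1^2) / b1^2) * l^2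
            + 6 * n^4 * k * (b1^2 - a1^2) / b1^2 = 0)
       \<and> (\<exists>l::real. l > 0 \<and> char_poly \<mu> n k (vector [2 * k / n^2, 0, z0]) l = 0)"
proof -
  have mk: "- \<mu> / (2 * k) > 0" using assms(1,4) by (simp add: field_simps)
  have b1pos: "b1 > 0" using b1 mk by (simp add: real_root_gt_zero)
  have b13: "b1^3 = - \<mu> / (2 * k)" using b1 mk by simp
  have mu: "\<mu> = -2*k*b1^3" using b13 assms(4) by (simp add: field_simps)
  have z2: "z0^2 = b1^2 - a1^2" using z0 assms(8) by auto
  define P where "P = (vector [2 * k / n^2, 0, z0] :: real^3)"
  have P1: "P$1 = 2 * k / n^2" "P$2 = 0" "P$3 = z0" unfolding P_def by simp_all
  have W: "(P$1+\<mu>-1)^2 + (P$2)^2 + (P$3)^2 = b1^2" using z2 a1 P1 by simp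
  have sW: "sqrt (b1^2) = b1" using b1pos by simp
  have H: "partial2 (Omega \<mu> n k) i j P =
     n^2*((axis j 1::real^3)$1*(axis i 1::real^3)$1 + (axis j 1::real^3)$2*(axis i 1::real^3)$2)
     - 2*k*((axis j 1::real^3)$1*(axis i 1::real^3)$1+(axis j 1::real^3)$2*(axis i 1::real^3)$2+(axis j 1::real^3)$3*(axis i 1::real^3)$3)
     - \<mu>*((axis j 1::real^3)$1*(axis i 1::real^3)$1+(axis j 1::real^3)$2*(axis i 1::real^3)$2+(axis j 1::real^3)$3*(axis i 1::real^3)$3) / (b1^2 * b1)
     + 3*\<mu>*(a1*(axis j 1::real^3)$1 + z0*(axis j 1::real^3)$3)*(a1*(axis i 1::real^3)$1 + z0*(axis i 1::real^3)$3) / ((b1^2)^2 * b1)" for i j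
    unfolding partial2_def
    apply (subst hess)
    using W b1pos apply simp
    unfolding W sW using P1 a1 by simp
  define Q where "Q l = l^6 + 2 * (n^2 + 3 * k) * l^4
            + n^2 * (n^2 - 6 * k * (3 * a1^2 - b1^2) / b1^2) * l^2
            + 6 * n^4 * k * (b1^2 - a1^2) / b1^2" for l :: real
  define Q2 where "Q2 l = l^6 + 2 * (n^2 + 3 * k) * l^4
            + n^2 * (n^2 + 12 * k - 18 * k * a1^2 / b1^2) * l^2
            + 6 * n^4 * k * (b1^2 - a1^2) / b1^2" for l :: real
  have e1: "\<mu> / (b1^2*b1) = -2*k" using mu b1pos by (simp add: field_simps eval_nat_numeral)
  have e2: "3*\<mu>*a1*a1/(b1^4*b1) = -6*k*a1^2/b1^2" using mu b1pos by (simp add: field_simps eval_nat_numeral)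
  have e3: "3*\<mu>*z0*z0/(b1^4*b1) = -6*k*z0^2/b1^2" using mu b1pos by (simp add: field_simps eval_nat_numeral)
  have e4: "9*(\<mu>*(z0*(a1*(X*(\<mu>*(a1*z0))))))/(b1^4*b1*(b1^4*b1)) = X*(36*k^2*a1^2*z0^2/b1^4)" for X
    using mu b1pos by (simp add: field_simps eval_nat_numeral)
  have CP: "char_poly \<mu> n k P l = Q2 l" for l
    unfolding char_poly_def char_matrix_def Let_def H det_3
    apply (simp add: axis_def)
    apply (simp only: e1 e2 e3 e4)
    unfolding Q2_def z2
    using b1pos apply (simp add: field_simps)
    apply algebra
    done
  have "6 * n^4 * (b1^2 - a1^2) > 0" using assms(3,8) by simp
  then have "k * (6 * n^4 * (b1^2 - a1^2)) < 0" using assms(4) by (simp add: mult_neg_pos)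
  then have c0: "6 * n^4 * k * (b1^2 - a1^2) / b1^2 < 0"
    using b1pos by (simp add: divide_neg_pos mult.commute mult.left_commute)
  have sq: "\<exists>l>0. l^6 + c2 * l^4 + c1 * l^2 + 6 * n^4 * k * (b1^2 - a1^2) / b1^2 = 0" for c2 c1
  proof -
    obtain L where L: "L > 0" "L^3 + c2*L^2 + c1*L + 6 * n^4 * k * (b1^2 - a1^2) / b1^2 = 0"
      using cubic_root[OF c0] by blast
    define l where "l = sqrt L"
    have l: "l > 0" "l^2 = L" using L(1) unfolding l_def by auto
    have l6: "l^6 = L^3" "l^4 = L^2" unfolding l(2)[symmetric] by (simp_all flip: power_mult)
    have "l^6 + c2 * l^4 + c1 * l^2 + 6 * n^4 * k * (b1^2 - a1^2) / b1^2 = 0"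
      unfolding l6 l(2) by (rule L(2))
    with l(1) show ?thesis by blast
  qed
  have A: "\<exists>l>0. Q l = 0" unfolding Q_def by (rule sq)
  have B: "\<exists>l>0. Q2 l = 0" unfolding Q2_def by (rule sq)
  have B': "\<exists>l>0. char_poly \<mu> n k P l = 0" using B CP by simp
  show ?thesis using A B' unfolding Q_def P_def by blast
qed

end
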